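(* Let $\mathcal{A}$ be a $k$-linear abelian category with enough injectives, over a field $k$. Let $C$ be an object of $\mathcal{A}$ whose endomorphism ring $\operatorname{Hom}(C,C)$ is local. Let $A$ be another object of $\mathcal{A}$ for which there is a natural equivalence of functors \[ \operatorname{Hom}(C,-)' \simeq \operatorname{Ext}^d(-,A) \] for some integer $d \geq 1$, where $(-)' = \operatorname{Hom}_k(-,k)$ denotes the $k$-dual. Then there is a short exact sequence \[ 0 \rightarrow \Sigma^{d-1}A \longrightarrow B \xrightarrow{g} C \rightarrow 0 \] in $\mathcal{A}$ in which $g$ is right almost split, where $\Sigma^{d-1}A$ is the $(d-1)$'st syzygy in an injective resolution of $A$.
   Context: Given an injective resolution $0 \to A \to I^0 \to I^1 \to \cdots$ of $A$, the syzygies are defined by $\Sigma^0 A = A$ and $\Sigma^{\ell+1}A = \operatorname{Coker}(\Sigma^{\ell}A \to I^{\ell})$ (equivalently the image of $I^{\ell} \to I^{\ell+1}$). A morphism $g : B \to C$ is right almost split if $g$ is not a split epimorphism and every morphism $Y \to C$ which is not a split epimorphism factors through $g$. *)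

theory Defs
  imports Main
begin

text \<open>Objects have type 'o, morphisms type 'm, scalars type 'k (a field).
  cmp g f is the composite "g after f".\<close>

record ('o, 'm, 'k) kcat =
  Ob    :: "'o set"
  Hom   :: "'o \<Rightarrow> 'o \<Rightarrow> 'm set"
  cmp   :: "'m \<Rightarrow> 'm \<Rightarrow> 'm"
  idm   :: "'o \<Rightarrow> 'm"
  madd  :: "'m \<Rightarrow> 'm \<Rightarrow> 'm"
  msmult :: "'k \<Rightarrow> 'm \<Rightarrow> 'm"
  mzero :: "'o \<Rightarrow> 'o \<Rightarrow> 'm"

definition msub :: "('o, 'm, 'k::field) kcat \<Rightarrow> 'm \<Rightarrow> 'm \<Rightarrow> 'm" where
  "msub K f g = madd K f (msmult K (-1) g)"

definition klinear_category :: "('o, 'm, 'k::field) kcat \<Rightarrow> bool" where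
  "klinear_category K \<longleftrightarrow>
     \<comment> \<open>category\<close>
     (\<forall>X\<in>Ob K. \<forall>Y\<in>Ob K. \<forall>X'\<in>Ob K. \<forall>Y'\<in>Ob K.
        Hom K X Y \<inter> Hom K X' Y' \<noteq> {} \<longrightarrow> X = X' \<and> Y = Y') \<and>
     (\<forall>X\<in>Ob K. idm K X \<in> Hom K X X) \<and>
     (\<forall>X\<in>Ob K. \<forall>Y\<in>Ob K. \<forall>Z\<in>Ob K. \<forall>f\<in>Hom K X Y. \<forall>g\<in>Hom K Y Z.
        cmp K g f \<in> Hom K X Z) \<and>
     (\<forall>W\<in>Ob K. \<forall>X\<in>Ob K. \<forall>Y\<in>Ob K. \<forall>Z\<in>Ob K.
        \<forall>f\<in>Hom K W X. \<forall>g\<in>Hom K X Y. \<forall>h\<in>Hom K Y Z.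
        cmp K h (cmp K g f) = cmp K (cmp K h g) f) \<and>
     (\<forall>X\<in>Ob K. \<forall>Y\<in>Ob K. \<forall>f\<in>Hom K X Y.
        cmp K f (idm K X) = f \<and> cmp K (idm K Y) f = f) \<and>
     \<comment> \<open>each Hom set is a k-vector space\<close>
     (\<forall>X\<in>Ob K. \<forall>Y\<in>Ob K.
        mzero K X Y \<in> Hom K X Y \<and>
        (\<forall>f\<in>Hom K X Y. \<forall>g\<in>Hom K X Y. madd K f g \<in> Hom K X Y) \<and>
        (\<forall>a. \<forall>f\<in>Hom K X Y. msmult K a f \<in> Hom K X Y) \<and>
        (\<forall>f\<in>Hom K X Y. \<forall>g\<in>Hom K X Y. \<forall>h\<in>Hom K X Y.
           madd K (madd K f g) h = madd K f (madd K g h)) \<and>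
        (\<forall>f\<in>Hom K X Y. \<forall>g\<in>Hom K X Y. madd K f g = madd K g f) \<and>
        (\<forall>f\<in>Hom K X Y. madd K f (mzero K X Y) = f) \<and>
        (\<forall>f\<in>Hom K X Y. madd K f (msmult K (-1) f) = mzero K X Y) \<and>
        (\<forall>a b. \<forall>f\<in>Hom K X Y. msmult K a (msmult K b f) = msmult K (a * b) f) \<and>
        (\<forall>f\<in>Hom K X Y. msmult K 1 f = f) \<and>
        (\<forall>a. \<forall>f\<in>Hom K X Y. \<forall>g\<in>Hom K X Y.
           msmult K a (madd K f g) = madd K (msmult K a f) (msmult K a g)) \<and>
        (\<forall>a b. \<forall>f\<in>Hom K X Y.
           msmult K (a + b) f = madd K (msmult K a f) (msmult K b f))) \<and>
     \<comment> \<open>composition is k-bilinear\<close>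
     (\<forall>X\<in>Ob K. \<forall>Y\<in>Ob K. \<forall>Z\<in>Ob K.
        (\<forall>f\<in>Hom K X Y. \<forall>f'\<in>Hom K X Y. \<forall>g\<in>Hom K Y Z.
           cmp K g (madd K f f') = madd K (cmp K g f) (cmp K g f')) \<and>
        (\<forall>f\<in>Hom K X Y. \<forall>g\<in>Hom K Y Z. \<forall>g'\<in>Hom K Y Z.
           cmp K (madd K g g') f = madd K (cmp K g f) (cmp K g' f)) \<and>
        (\<forall>a. \<forall>f\<in>Hom K X Y. \<forall>g\<in>Hom K Y Z.
           cmp K g (msmult K a f) = msmult K a (cmp K g f) \<and>
           cmp K (msmult K a g) f = msmult K a (cmp K g f)))"

definition mono :: "('o, 'm, 'k) kcat \<Rightarrow> 'o \<Rightarrow> 'o \<Rightarrow> 'm \<Rightarrow> bool" where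
  "mono K X Y f \<longleftrightarrow> f \<in> Hom K X Y \<and>
     (\<forall>W\<in>Ob K. \<forall>g\<in>Hom K W X. \<forall>h\<in>Hom K W X. cmp K f g = cmp K f h \<longrightarrow> g = h)"

definition epi :: "('o, 'm, 'k) kcat \<Rightarrow> 'o \<Rightarrow> 'o \<Rightarrow> 'm \<Rightarrow> bool" where
  "epi K X Y f \<longleftrightarrow> f \<in> Hom K X Y \<and>
     (\<forall>W\<in>Ob K. \<forall>g\<in>Hom K Y W. \<forall>h\<in>Hom K Y W. cmp K g f = cmp K h f \<longrightarrow> g = h)"

definition is_kernel :: "('o, 'm, 'k) kcat \<Rightarrow> 'o \<Rightarrow> 'o \<Rightarrow> 'o \<Rightarrow> 'm \<Rightarrow> 'm \<Rightarrow> bool" where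
  "is_kernel K N X Y k f \<longleftrightarrow> N \<in> Ob K \<and> k \<in> Hom K N X \<and> f \<in> Hom K X Y \<and>
     cmp K f k = mzero K N Y \<and>
     (\<forall>W\<in>Ob K. \<forall>h\<in>Hom K W X. cmp K f h = mzero K W Y \<longrightarrow>
        (\<exists>!u. u \<in> Hom K W N \<and> cmp K k u = h))"

definition is_cokernel :: "('o, 'm, 'k) kcat \<Rightarrow> 'o \<Rightarrow> 'o \<Rightarrow> 'o \<Rightarrow> 'm \<Rightarrow> 'm \<Rightarrow> bool" where
  "is_cokernel K X Y Q c f \<longleftrightarrow> Q \<in> Ob K \<and> f \<in> Hom K X Y \<and> c \<in> Hom K Y Q \<and>
     cmp K c f = mzero K X Q \<and>
     (\<forall>W\<in>Ob K. \<forall>h\<in>Hom K Y W. cmp K h f = mzero K X W \<longrightarrow>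
        (\<exists>!u. u \<in> Hom K Q W \<and> cmp K u c = h))"

definition abelian :: "('o, 'm, 'k::field) kcat \<Rightarrow> bool" where
  "abelian K \<longleftrightarrow>
     \<comment> \<open>zero object\<close>
     (\<exists>Z\<in>Ob K. \<forall>X\<in>Ob K. (\<exists>!f. f \<in> Hom K Z X) \<and> (\<exists>!f. f \<in> Hom K X Z)) \<and>
     \<comment> \<open>binary biproducts\<close>
     (\<forall>X\<in>Ob K. \<forall>Y\<in>Ob K. \<exists>P\<in>Ob K. \<exists>i1 i2 p1 p2.
        i1 \<in> Hom K X P \<and> i2 \<in> Hom K Y P \<and> p1 \<in> Hom K P X \<and> p2 \<in> Hom K P Y \<and>
        cmp K p1 i1 = idm K X \<and> cmp K p2 i2 = idm K Y \<and>
        cmp K p1 i2 = mzero K Y X \<and> cmp K p2 i1 = mzero K X Y \<and>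
        madd K (cmp K i1 p1) (cmp K i2 p2) = idm K P) \<and>
     \<comment> \<open>kernels and cokernels exist\<close>
     (\<forall>X\<in>Ob K. \<forall>Y\<in>Ob K. \<forall>f\<in>Hom K X Y.
        (\<exists>N k. is_kernel K N X Y k f) \<and> (\<exists>Q c. is_cokernel K X Y Q c f)) \<and>
     \<comment> \<open>every mono is a kernel, every epi is a cokernel\<close>
     (\<forall>X\<in>Ob K. \<forall>Y\<in>Ob K. \<forall>f. mono K X Y f \<longrightarrow>
        (\<exists>Z\<in>Ob K. \<exists>g. is_kernel K X Y Z f g)) \<and>
     (\<forall>X\<in>Ob K. \<forall>Y\<in>Ob K. \<forall>f. epi K X Y f \<longrightarrow>
        (\<exists>Z\<in>Ob K. \<exists>g. is_cokernel K Z X Y f g))"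

definition injective_obj :: "('o, 'm, 'k) kcat \<Rightarrow> 'o \<Rightarrow> bool" where
  "injective_obj K I \<longleftrightarrow> I \<in> Ob K \<and>
     (\<forall>X\<in>Ob K. \<forall>Y\<in>Ob K. \<forall>m h. mono K X Y m \<longrightarrow> h \<in> Hom K X I \<longrightarrow>
        (\<exists>h'\<in>Hom K Y I. cmp K h' m = h))"

definition enough_injectives :: "('o, 'm, 'k) kcat \<Rightarrow> bool" where
  "enough_injectives K \<longleftrightarrow>
     (\<forall>X\<in>Ob K. \<exists>I m. injective_obj K I \<and> mono K X I m)"

definition klinear_abelian_enough_inj :: "('o, 'm, 'k::field) kcat \<Rightarrow> bool" where
  "klinear_abelian_enough_inj K \<longleftrightarrow>
     klinear_category K \<and> abelian K \<and> enough_injectives K"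

definition iso_endo :: "('o, 'm, 'k) kcat \<Rightarrow> 'o \<Rightarrow> 'm \<Rightarrow> bool" where
  "iso_endo K C f \<longleftrightarrow> f \<in> Hom K C C \<and>
     (\<exists>g\<in>Hom K C C. cmp K g f = idm K C \<and> cmp K f g = idm K C)"

text \<open>The ring (Hom(C,C), +, \<circ>) is local: 1 \<noteq> 0 and the non-units are closed
  under addition (i.e. the non-units form the unique maximal ideal).\<close>
definition local_endring :: "('o, 'm, 'k) kcat \<Rightarrow> 'o \<Rightarrow> bool" where
  "local_endring K C \<longleftrightarrow> idm K C \<noteq> mzero K C C \<and>
     (\<forall>f\<in>Hom K C C. \<forall>g\<in>Hom K C C.
        \<not> iso_endo K C f \<longrightarrow> \<not> iso_endo K C g \<longrightarrow> \<not> iso_endo K C (madd K f g))"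

definition split_epi :: "('o, 'm, 'k) kcat \<Rightarrow> 'o \<Rightarrow> 'o \<Rightarrow> 'm \<Rightarrow> bool" where
  "split_epi K Y C h \<longleftrightarrow> h \<in> Hom K Y C \<and> (\<exists>s\<in>Hom K C Y. cmp K h s = idm K C)"

definition right_almost_split :: "('o, 'm, 'k) kcat \<Rightarrow> 'o \<Rightarrow> 'o \<Rightarrow> 'm \<Rightarrow> bool" where
  "right_almost_split K B C g \<longleftrightarrow> g \<in> Hom K B C \<and> \<not> split_epi K B C g \<and>
     (\<forall>Y\<in>Ob K. \<forall>h\<in>Hom K Y C. \<not> split_epi K Y C h \<longrightarrow>
        (\<exists>u\<in>Hom K Y B. cmp K g u = h))"

text \<open>An injective resolution 0 \<rightarrow> A \<rightarrow> I^0 \<rightarrow> I^1 \<rightarrow> ... is recorded together with its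
  syzygies: S 0 = A, \<iota> n : S n \<rightarrow> I n is the (monic) map from the n-th syzygy,
  and \<pi> n : I n \<rightarrow> S (n+1) is a cokernel of \<iota> n, so that
  S (n+1) = Coker(S n \<rightarrow> I n).\<close>
definition inj_resolution ::
  "('o, 'm, 'k) kcat \<Rightarrow> 'o \<Rightarrow> (nat \<Rightarrow> 'o) \<Rightarrow> (nat \<Rightarrow> 'o) \<Rightarrow> (nat \<Rightarrow> 'm) \<Rightarrow> (nat \<Rightarrow> 'm) \<Rightarrow> bool"
  where
  "inj_resolution K A S I \<iota> \<pi> \<longleftrightarrow> S 0 = A \<and>
     (\<forall>n. S n \<in> Ob K \<and> injective_obj K (I n) \<and>
          mono K (S n) (I n) (\<iota> n) \<and>
          is_cokernel K (S n) (I n) (S (Suc n)) (\<pi> n) (\<iota> n))"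

definition res_diff :: "('o, 'm, 'k) kcat \<Rightarrow> (nat \<Rightarrow> 'm) \<Rightarrow> (nat \<Rightarrow> 'm) \<Rightarrow> nat \<Rightarrow> 'm" where
  "res_diff K \<iota> \<pi> n = cmp K (\<iota> (Suc n)) (\<pi> n)"

definition ext_cocycles ::
  "('o, 'm, 'k) kcat \<Rightarrow> (nat \<Rightarrow> 'o) \<Rightarrow> (nat \<Rightarrow> 'm) \<Rightarrow> (nat \<Rightarrow> 'm) \<Rightarrow> nat \<Rightarrow> 'o \<Rightarrow> 'm set" where
  "ext_cocycles K I \<iota> \<pi> d X =
     {f \<in> Hom K X (I d). cmp K (res_diff K \<iota> \<pi> d) f = mzero K X (I (Suc d))}"

text \<open>Coboundaries in degree d \<ge> 1.\<close>
definition ext_coboundaries ::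
  "('o, 'm, 'k) kcat \<Rightarrow> (nat \<Rightarrow> 'o) \<Rightarrow> (nat \<Rightarrow> 'm) \<Rightarrow> (nat \<Rightarrow> 'm) \<Rightarrow> nat \<Rightarrow> 'o \<Rightarrow> 'm set" where
  "ext_coboundaries K I \<iota> \<pi> d X =
     {cmp K (res_diff K \<iota> \<pi> (d - 1)) g | g. g \<in> Hom K X (I (d - 1))}"

definition ext_class ::
  "('o, 'm, 'k::field) kcat \<Rightarrow> (nat \<Rightarrow> 'o) \<Rightarrow> (nat \<Rightarrow> 'm) \<Rightarrow> (nat \<Rightarrow> 'm) \<Rightarrow> nat \<Rightarrow> 'o \<Rightarrow> 'm \<Rightarrow> 'm set" where
  "ext_class K I \<iota> \<pi> d X f =
     {f' \<in> ext_cocycles K I \<iota> \<pi> d X. msub K f' f \<in> ext_coboundaries K I \<iota> \<pi> d X}"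

definition Ext ::
  "('o, 'm, 'k::field) kcat \<Rightarrow> (nat \<Rightarrow> 'o) \<Rightarrow> (nat \<Rightarrow> 'm) \<Rightarrow> (nat \<Rightarrow> 'm) \<Rightarrow> nat \<Rightarrow> 'o \<Rightarrow> 'm set set" where
  "Ext K I \<iota> \<pi> d X = ext_class K I \<iota> \<pi> d X ` ext_cocycles K I \<iota> \<pi> d X"

definition hom_dual :: "('o, 'm, 'k::field) kcat \<Rightarrow> 'o \<Rightarrow> 'o \<Rightarrow> ('m \<Rightarrow> 'k) set" where
  "hom_dual K C X = {\<phi>.
     (\<forall>h\<in>Hom K C X. \<forall>h'\<in>Hom K C X. \<phi> (madd K h h') = \<phi> h + \<phi> h') \<and>
     (\<forall>a. \<forall>h\<in>Hom K C X. \<phi> (msmult K a h) = a * \<phi> h) \<and>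
     (\<forall>h. h \<notin> Hom K C X \<longrightarrow> \<phi> h = 0)}"

definition hom_dual_map :: "('o, 'm, 'k::field) kcat \<Rightarrow> 'o \<Rightarrow> 'o \<Rightarrow> 'm \<Rightarrow> ('m \<Rightarrow> 'k) \<Rightarrow> ('m \<Rightarrow> 'k)" where
  "hom_dual_map K C X u \<phi> = (\<lambda>h. if h \<in> Hom K C X then \<phi> (cmp K u h) else 0)"

definition nat_equiv_dual_ext ::
  "('o, 'm, 'k::field) kcat \<Rightarrow> 'o \<Rightarrow> (nat \<Rightarrow> 'o) \<Rightarrow> (nat \<Rightarrow> 'm) \<Rightarrow> (nat \<Rightarrow> 'm) \<Rightarrow> nat
     \<Rightarrow> ('o \<Rightarrow> ('m \<Rightarrow> 'k) \<Rightarrow> 'm set) \<Rightarrow> bool" where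
  "nat_equiv_dual_ext K C I \<iota> \<pi> d \<eta> \<longleftrightarrow>
     (\<forall>X\<in>Ob K.
        \<comment> \<open>each component is a bijection ...\<close>
        bij_betw (\<eta> X) (hom_dual K C X) (Ext K I \<iota> \<pi> d X) \<and>
        \<comment> \<open>... which is k-linear\<close>
        (\<forall>\<phi>\<in>hom_dual K C X. \<forall>\<psi>\<in>hom_dual K C X. \<forall>a b.
           \<forall>f\<in>ext_cocycles K I \<iota> \<pi> d X. \<forall>g\<in>ext_cocycles K I \<iota> \<pi> d X.
           \<eta> X \<phi> = ext_class K I \<iota> \<pi> d X f \<longrightarrow> \<eta> X \<psi> = ext_class K I \<iota> \<pi> d X g \<longrightarrow>
           \<eta> X (\<lambda>h. a * \<phi> h + b * \<psi> h) =
             ext_class K I \<iota> \<pi> d X (madd K (msmult K a f) (msmult K b g)))) \<and>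
     \<comment> \<open>naturality in X (both functors are contravariant)\<close>
     (\<forall>X\<in>Ob K. \<forall>Y\<in>Ob K. \<forall>u\<in>Hom K X Y. \<forall>\<phi>\<in>hom_dual K C Y.
        \<forall>f\<in>ext_cocycles K I \<iota> \<pi> d Y.
        \<eta> Y \<phi> = ext_class K I \<iota> \<pi> d Y f \<longrightarrow>
        \<eta> X (hom_dual_map K C X u \<phi>) = ext_class K I \<iota> \<pi> d X (cmp K f u))"

end

theory Submission
  imports Defs
begin


locale KL = fixes K :: "('o,'m,'k::field) kcat" assumes KL: "klinear_category K"
begin

lemmas KLs = KL[unfolded klinear_category_def]
lemmas K_id = KLs[THEN conjunct2, THEN conjunct1]
lemmas K_cmp = KLs[THEN conjunct2, THEN conjunct2, THEN conjunct1]
lemmas K_assoc = KLs[THEN conjunct2, THEN conjunct2, THEN conjunct2, THEN conjunct1]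
lemmas K_idl = KLs[THEN conjunct2, THEN conjunct2, THEN conjunct2, THEN conjunct2, THEN conjunct1]
lemmas K_vs = KLs[THEN conjunct2, THEN conjunct2, THEN conjunct2, THEN conjunct2, THEN conjunct2, THEN conjunct1]
lemmas K_bil = KLs[THEN conjunct2, THEN conjunct2, THEN conjunct2, THEN conjunct2, THEN conjunct2, THEN conjunct2]

lemma K_vsXY: "X \<in> Ob K \<Longrightarrow> Y \<in> Ob K \<Longrightarrow>
        mzero K X Y \<in> Hom K X Y \<and>
        (\<forall>f\<in>Hom K X Y. \<forall>g\<in>Hom K X Y. madd K f g \<in> Hom K X Y) \<and>
        (\<forall>a. \<forall>f\<in>Hom K X Y. msmult K a f \<in> Hom K X Y) \<and>
        (\<forall>f\<in>Hom K X Y. \<forall>g\<in>Hom K X Y. \<forall>h\<in>Hom K X Y.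
           madd K (madd K f g) h = madd K f (madd K g h)) \<and>
        (\<forall>f\<in>Hom K X Y. \<forall>g\<in>Hom K X Y. madd K f g = madd K g f) \<and>
        (\<forall>f\<in>Hom K X Y. madd K f (mzero K X Y) = f) \<and>
        (\<forall>f\<in>Hom K X Y. madd K f (msmult K (-1) f) = mzero K X Y) \<and>
        (\<forall>a b. \<forall>f\<in>Hom K X Y. msmult K a (msmult K b f) = msmult K (a * b) f) \<and>
        (\<forall>f\<in>Hom K X Y. msmult K 1 f = f) \<and>
        (\<forall>a. \<forall>f\<in>Hom K X Y. \<forall>g\<in>Hom K X Y.
           msmult K a (madd K f g) = madd K (msmult K a f) (msmult K a g)) \<and>
        (\<forall>a b. \<forall>f\<in>Hom K X Y.
           msmult K (a + b) f = madd K (msmult K a f) (msmult K b f))"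
  by (rule K_vs[THEN bspec, THEN bspec])
lemmas vs0 = K_vsXY[THEN conjunct1]
lemmas vs1 = K_vsXY[THEN conjunct2, THEN conjunct1]
lemmas vs2 = K_vsXY[THEN conjunct2, THEN conjunct2, THEN conjunct1]
lemmas vs3 = K_vsXY[THEN conjunct2, THEN conjunct2, THEN conjunct2, THEN conjunct1]
lemmas vs4 = K_vsXY[THEN conjunct2, THEN conjunct2, THEN conjunct2, THEN conjunct2, THEN conjunct1]
lemmas vs5 = K_vsXY[THEN conjunct2, THEN conjunct2, THEN conjunct2, THEN conjunct2, THEN conjunct2, THEN conjunct1]
lemmas vs6 = K_vsXY[THEN conjunct2, THEN conjunct2, THEN conjunct2, THEN conjunct2, THEN conjunct2, THEN conjunct2, THEN conjunct1]
lemmas vs7 = K_vsXY[THEN conjunct2, THEN conjunct2, THEN conjunct2, THEN conjunct2, THEN conjunct2, THEN conjunct2, THEN conjunct2, THEN conjunct1]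
lemmas vs8 = K_vsXY[THEN conjunct2, THEN conjunct2, THEN conjunct2, THEN conjunct2, THEN conjunct2, THEN conjunct2, THEN conjunct2, THEN conjunct2, THEN conjunct1]
lemmas vs9 = K_vsXY[THEN conjunct2, THEN conjunct2, THEN conjunct2, THEN conjunct2, THEN conjunct2, THEN conjunct2, THEN conjunct2, THEN conjunct2, THEN conjunct2, THEN conjunct1]
lemmas vs10 = K_vsXY[THEN conjunct2, THEN conjunct2, THEN conjunct2, THEN conjunct2, THEN conjunct2, THEN conjunct2, THEN conjunct2, THEN conjunct2, THEN conjunct2, THEN conjunct2]

lemma K_bilXYZ: "X \<in> Ob K \<Longrightarrow> Y \<in> Ob K \<Longrightarrow> Z \<in> Ob K \<Longrightarrow>
        (\<forall>f\<in>Hom K X Y. \<forall>f'\<in>Hom K X Y. \<forall>g\<in>Hom K Y Z.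
           cmp K g (madd K f f') = madd K (cmp K g f) (cmp K g f')) \<and>
        (\<forall>f\<in>Hom K X Y. \<forall>g\<in>Hom K Y Z. \<forall>g'\<in>Hom K Y Z.
           cmp K (madd K g g') f = madd K (cmp K g f) (cmp K g' f)) \<and>
        (\<forall>a. \<forall>f\<in>Hom K X Y. \<forall>g\<in>Hom K Y Z.
           cmp K g (msmult K a f) = msmult K a (cmp K g f) \<and>
           cmp K (msmult K a g) f = msmult K a (cmp K g f))"
  by (rule K_bil[THEN bspec, THEN bspec, THEN bspec])
lemmas bil0 = K_bilXYZ[THEN conjunct1]
lemmas bil1 = K_bilXYZ[THEN conjunct2, THEN conjunct1]
lemmas bil2 = K_bilXYZ[THEN conjunct2, THEN conjunct2]

lemma id_hom: "X \<in> Ob K \<Longrightarrow> idm K X \<in> Hom K X X"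
  using K_id by blast
lemma cmp_hom: "X \<in> Ob K \<Longrightarrow> Y \<in> Ob K \<Longrightarrow> Z \<in> Ob K \<Longrightarrow> f \<in> Hom K X Y \<Longrightarrow> g \<in> Hom K Y Z \<Longrightarrow> cmp K g f \<in> Hom K X Z"
  using K_cmp by blast
lemma assoc: "W \<in> Ob K \<Longrightarrow> X \<in> Ob K \<Longrightarrow> Y \<in> Ob K \<Longrightarrow> Z \<in> Ob K \<Longrightarrow> f \<in> Hom K W X \<Longrightarrow> g \<in> Hom K X Y \<Longrightarrow> h \<in> Hom K Y Z \<Longrightarrow>
   cmp K h (cmp K g f) = cmp K (cmp K h g) f"
  using K_assoc by blast
lemma id_r: "X \<in> Ob K \<Longrightarrow> Y \<in> Ob K \<Longrightarrow> f \<in> Hom K X Y \<Longrightarrow> cmp K f (idm K X) = f"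
  using K_idl by blast
lemma id_l: "X \<in> Ob K \<Longrightarrow> Y \<in> Ob K \<Longrightarrow> f \<in> Hom K X Y \<Longrightarrow> cmp K (idm K Y) f = f"
  using K_idl by blast
lemma zero_hom: "X \<in> Ob K \<Longrightarrow> Y \<in> Ob K \<Longrightarrow> mzero K X Y \<in> Hom K X Y"
  using vs0 by blast
lemma add_hom: "X \<in> Ob K \<Longrightarrow> Y \<in> Ob K \<Longrightarrow> f \<in> Hom K X Y \<Longrightarrow> g \<in> Hom K X Y \<Longrightarrow> madd K f g \<in> Hom K X Y"
  using vs1 by blast
lemma smult_hom: "X \<in> Ob K \<Longrightarrow> Y \<in> Ob K \<Longrightarrow> f \<in> Hom K X Y \<Longrightarrow> msmult K a f \<in> Hom K X Y"
  using vs2 by blast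
lemma add_assoc: "X \<in> Ob K \<Longrightarrow> Y \<in> Ob K \<Longrightarrow> f \<in> Hom K X Y \<Longrightarrow> g \<in> Hom K X Y \<Longrightarrow> h \<in> Hom K X Y \<Longrightarrow>
  madd K (madd K f g) h = madd K f (madd K g h)"
  using vs3 by blast
lemma add_comm: "X \<in> Ob K \<Longrightarrow> Y \<in> Ob K \<Longrightarrow> f \<in> Hom K X Y \<Longrightarrow> g \<in> Hom K X Y \<Longrightarrow> madd K f g = madd K g f"
  using vs4 by blast
lemma add_zero: "X \<in> Ob K \<Longrightarrow> Y \<in> Ob K \<Longrightarrow> f \<in> Hom K X Y \<Longrightarrow> madd K f (mzero K X Y) = f"
  using vs5 by blast
lemma add_neg: "X \<in> Ob K \<Longrightarrow> Y \<in> Ob K \<Longrightarrow> f \<in> Hom K X Y \<Longrightarrow> madd K f (msmult K (-1) f) = mzero K X Y"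
  using vs6 by blast
lemma smult_smult: "X \<in> Ob K \<Longrightarrow> Y \<in> Ob K \<Longrightarrow> f \<in> Hom K X Y \<Longrightarrow> msmult K a (msmult K b f) = msmult K (a * b) f"
  using vs7 by blast
lemma smult_one: "X \<in> Ob K \<Longrightarrow> Y \<in> Ob K \<Longrightarrow> f \<in> Hom K X Y \<Longrightarrow> msmult K 1 f = f"
  using vs8 by blast
lemma smult_add: "X \<in> Ob K \<Longrightarrow> Y \<in> Ob K \<Longrightarrow> f \<in> Hom K X Y \<Longrightarrow> g \<in> Hom K X Y \<Longrightarrow>
   msmult K a (madd K f g) = madd K (msmult K a f) (msmult K a g)"
  using vs9 by blast
lemma add_smult: "X \<in> Ob K \<Longrightarrow> Y \<in> Ob K \<Longrightarrow> f \<in> Hom K X Y \<Longrightarrow>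
   msmult K (a + b) f = madd K (msmult K a f) (msmult K b f)"
  using vs10 by blast
lemma cmp_add_r: "X \<in> Ob K \<Longrightarrow> Y \<in> Ob K \<Longrightarrow> Z \<in> Ob K \<Longrightarrow> f \<in> Hom K X Y \<Longrightarrow> f' \<in> Hom K X Y \<Longrightarrow> g \<in> Hom K Y Z \<Longrightarrow>
  cmp K g (madd K f f') = madd K (cmp K g f) (cmp K g f')"
  using bil0 by blast
lemma cmp_add_l: "X \<in> Ob K \<Longrightarrow> Y \<in> Ob K \<Longrightarrow> Z \<in> Ob K \<Longrightarrow> f \<in> Hom K X Y \<Longrightarrow> g \<in> Hom K Y Z \<Longrightarrow> g' \<in> Hom K Y Z \<Longrightarrow>
  cmp K (madd K g g') f = madd K (cmp K g f) (cmp K g' f)"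
  using bil1 by blast
lemma cmp_smult_r: "X \<in> Ob K \<Longrightarrow> Y \<in> Ob K \<Longrightarrow> Z \<in> Ob K \<Longrightarrow> f \<in> Hom K X Y \<Longrightarrow> g \<in> Hom K Y Z \<Longrightarrow>
  cmp K g (msmult K a f) = msmult K a (cmp K g f)"
  using bil2 by blast
lemma cmp_smult_l: "X \<in> Ob K \<Longrightarrow> Y \<in> Ob K \<Longrightarrow> Z \<in> Ob K \<Longrightarrow> f \<in> Hom K X Y \<Longrightarrow> g \<in> Hom K Y Z \<Longrightarrow>
  cmp K (msmult K a g) f = msmult K a (cmp K g f)"
  using bil2 by blast

lemma smult_zero_scalar: assumes "X \<in> Ob K" "Y \<in> Ob K" "f \<in> Hom K X Y"
  shows "msmult K 0 f = mzero K X Y"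
proof -
  let ?z = "msmult K 0 f"
  have h: "?z \<in> Hom K X Y" using assms smult_hom by blast
  have "madd K ?z ?z = ?z" using add_smult[OF assms, of 0 0] by simp
  hence "madd K (madd K ?z ?z) (msmult K (-1) ?z) = madd K ?z (msmult K (-1) ?z)" by simp
  hence "madd K ?z (madd K ?z (msmult K (-1) ?z)) = mzero K X Y"
    using add_assoc[OF assms(1,2) h h] add_neg[OF assms(1,2) h] smult_hom[OF assms(1,2) h] by simp
  thus ?thesis using add_neg[OF assms(1,2) h] add_zero[OF assms(1,2) h] by simp
qed

lemma smult_zero_vec: assumes "X \<in> Ob K" "Y \<in> Ob K"
  shows "msmult K a (mzero K X Y) = mzero K X Y"
proof -
  have z: "mzero K X Y \<in> Hom K X Y" using zero_hom assms by blast
  have "msmult K a (mzero K X Y) = msmult K a (msmult K 0 (mzero K X Y))"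
    using smult_zero_scalar[OF assms z] by simp
  also have "\<dots> = mzero K X Y" by (simp only: smult_smult[OF assms z]) (simp add: smult_zero_scalar[OF assms z])
  finally show ?thesis .
qed

lemma cmp_zero_r: assumes "X \<in> Ob K" "Y \<in> Ob K" "Z \<in> Ob K" "g \<in> Hom K Y Z"
  shows "cmp K g (mzero K X Y) = mzero K X Z"
proof -
  have z: "mzero K X Y \<in> Hom K X Y" using zero_hom assms by blast
  have "cmp K g (mzero K X Y) = cmp K g (msmult K 0 (mzero K X Y))"
    using smult_zero_scalar[OF assms(1,2) z] by simp
  also have "\<dots> = msmult K 0 (cmp K g (mzero K X Y))" using cmp_smult_r assms z by blast
  also have "\<dots> = mzero K X Z" using smult_zero_scalar cmp_hom assms z by blast
  finally show ?thesis .
qed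

lemma cmp_zero_l: assumes "X \<in> Ob K" "Y \<in> Ob K" "Z \<in> Ob K" "f \<in> Hom K X Y"
  shows "cmp K (mzero K Y Z) f = mzero K X Z"
proof -
  have z: "mzero K Y Z \<in> Hom K Y Z" using zero_hom assms by blast
  have "cmp K (mzero K Y Z) f = cmp K (msmult K 0 (mzero K Y Z)) f"
    using smult_zero_scalar[OF assms(2,3) z] by simp
  also have "\<dots> = msmult K 0 (cmp K (mzero K Y Z) f)" using cmp_smult_l assms z by blast
  also have "\<dots> = mzero K X Z" using smult_zero_scalar cmp_hom assms z by blast
  finally show ?thesis .
qed

lemma zero_add: "X \<in> Ob K \<Longrightarrow> Y \<in> Ob K \<Longrightarrow> f \<in> Hom K X Y \<Longrightarrow> madd K (mzero K X Y) f = f"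
  by (subst add_comm[OF _ _ zero_hom], assumption+) (rule add_zero)

lemma neg_add: "X \<in> Ob K \<Longrightarrow> Y \<in> Ob K \<Longrightarrow> f \<in> Hom K X Y \<Longrightarrow> madd K (msmult K (-1) f) f = mzero K X Y"
  by (subst add_comm[OF _ _ smult_hom], assumption+) (rule add_neg)

lemma msub_hom: "X \<in> Ob K \<Longrightarrow> Y \<in> Ob K \<Longrightarrow> f \<in> Hom K X Y \<Longrightarrow> g \<in> Hom K X Y \<Longrightarrow> msub K f g \<in> Hom K X Y"
  unfolding msub_def by (intro add_hom smult_hom)

lemma msub_zero: "X \<in> Ob K \<Longrightarrow> Y \<in> Ob K \<Longrightarrow> f \<in> Hom K X Y \<Longrightarrow> msub K f (mzero K X Y) = f"
  unfolding msub_def by (simp add: smult_zero_vec add_zero)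

lemma msub_self: "X \<in> Ob K \<Longrightarrow> Y \<in> Ob K \<Longrightarrow> f \<in> Hom K X Y \<Longrightarrow> msub K f f = mzero K X Y"
  unfolding msub_def by (rule add_neg)

lemma msub_eq0: assumes "X \<in> Ob K" "Y \<in> Ob K" "f \<in> Hom K X Y" "g \<in> Hom K X Y"
  and "msub K f g = mzero K X Y" shows "f = g"
proof -
  have ng: "msmult K (-1) g \<in> Hom K X Y" using smult_hom assms by blast
  have "f = madd K f (madd K (msmult K (-1) g) g)" using neg_add[OF assms(1,2,4)] add_zero[OF assms(1,2,3)] by simp
  also have "\<dots> = madd K (msub K f g) g" unfolding msub_def using add_assoc[OF assms(1,2,3) ng assms(4)] by simp
  also have "\<dots> = g" using assms zero_add by simp
  finally show ?thesis .
qed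

lemma cmp_msub_l: "X \<in> Ob K \<Longrightarrow> Y \<in> Ob K \<Longrightarrow> Z \<in> Ob K \<Longrightarrow> f \<in> Hom K X Y \<Longrightarrow> g \<in> Hom K Y Z \<Longrightarrow> g' \<in> Hom K Y Z \<Longrightarrow>
  cmp K (msub K g g') f = msub K (cmp K g f) (cmp K g' f)"
  unfolding msub_def by (simp add: cmp_add_l cmp_smult_l smult_hom)

lemma cmp_msub_r: "X \<in> Ob K \<Longrightarrow> Y \<in> Ob K \<Longrightarrow> Z \<in> Ob K \<Longrightarrow> f \<in> Hom K X Y \<Longrightarrow> f' \<in> Hom K X Y \<Longrightarrow> g \<in> Hom K Y Z \<Longrightarrow>
  cmp K g (msub K f f') = msub K (cmp K g f) (cmp K g f')"
  unfolding msub_def by (simp add: cmp_add_r cmp_smult_r smult_hom)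

end



definition subsp :: "('o,'m,'k::field) kcat \<Rightarrow> 'o \<Rightarrow> 'm set \<Rightarrow> bool" where
  "subsp K C M \<longleftrightarrow> M \<subseteq> Hom K C C \<and> mzero K C C \<in> M \<and> (\<forall>x\<in>M. \<forall>y\<in>M. madd K x y \<in> M) \<and>
     (\<forall>a. \<forall>x\<in>M. msmult K a x \<in> M)"

context KL begin
context fixes C assumes C: "C \<in> Ob K" begin

lemma vadd[simp]: "f \<in> Hom K C C \<Longrightarrow> g \<in> Hom K C C \<Longrightarrow> madd K f g \<in> Hom K C C" using add_hom C by blast
lemma vsm[simp]: "f \<in> Hom K C C \<Longrightarrow> msmult K a f \<in> Hom K C C" using smult_hom C by blast
lemma vzero[simp]: "mzero K C C \<in> Hom K C C" using zero_hom C by blast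
lemma vid[simp]: "idm K C \<in> Hom K C C" using id_hom C by blast
lemma vcomm: "f \<in> Hom K C C \<Longrightarrow> g \<in> Hom K C C \<Longrightarrow> madd K f g = madd K g f" using add_comm C by blast
lemma vassoc: "f \<in> Hom K C C \<Longrightarrow> g \<in> Hom K C C \<Longrightarrow> h \<in> Hom K C C \<Longrightarrow> madd K (madd K f g) h = madd K f (madd K g h)"
  using add_assoc C by blast
lemma vlcomm: "f \<in> Hom K C C \<Longrightarrow> g \<in> Hom K C C \<Longrightarrow> h \<in> Hom K C C \<Longrightarrow> madd K f (madd K g h) = madd K g (madd K f h)"
  by (metis vassoc vcomm)
lemma vsm_add: "f \<in> Hom K C C \<Longrightarrow> g \<in> Hom K C C \<Longrightarrow> msmult K a (madd K f g) = madd K (msmult K a f) (msmult K a g)"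
  using smult_add C by blast
lemma vadd_sm: "f \<in> Hom K C C \<Longrightarrow> msmult K (a + b) f = madd K (msmult K a f) (msmult K b f)"
  using add_smult C by blast
lemma vsm_sm: "f \<in> Hom K C C \<Longrightarrow> msmult K a (msmult K b f) = msmult K (a * b) f"
  using smult_smult C by blast
lemma vsm1: "f \<in> Hom K C C \<Longrightarrow> msmult K 1 f = f" using smult_one C by blast
lemma vsm0: "f \<in> Hom K C C \<Longrightarrow> msmult K 0 f = mzero K C C" using smult_zero_scalar C by blast
lemma vsmz: "msmult K a (mzero K C C) = mzero K C C" using smult_zero_vec C by blast
lemma vadd0: "f \<in> Hom K C C \<Longrightarrow> madd K f (mzero K C C) = f" using add_zero C by blast
lemma v0add: "f \<in> Hom K C C \<Longrightarrow> madd K (mzero K C C) f = f" using zero_add C by blast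
lemma vneg: "f \<in> Hom K C C \<Longrightarrow> madd K f (msmult K (-1) f) = mzero K C C" using add_neg C by blast

lemma canc2: assumes "f \<in> Hom K C C" "g \<in> Hom K C C"
  shows "madd K f (madd K g (msmult K (-1) f)) = g"
proof -
  have "madd K f (madd K g (msmult K (-1) f)) = madd K g (madd K f (msmult K (-1) f))"
    using assms by (simp add: vlcomm)
  also have "\<dots> = g" using assms by (simp add: vneg vadd0)
  finally show ?thesis .
qed

lemma canc1: assumes "f \<in> Hom K C C" "g \<in> Hom K C C" "h \<in> Hom K C C"
  shows "madd K (madd K f g) (madd K (msmult K (-1) f) h) = madd K g h"
proof -
  have "madd K (madd K f g) (madd K (msmult K (-1) f) h) = madd K (madd K f (msmult K (-1) f)) (madd K g h)"
    using assms by (simp add: vassoc vlcomm)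
  also have "\<dots> = madd K g h" using assms by (simp add: vneg v0add)
  finally show ?thesis .
qed

lemma vsub_add2: assumes "f \<in> Hom K C C" "g \<in> Hom K C C" "u \<in> Hom K C C" "v \<in> Hom K C C"
  shows "msub K (madd K f g) (madd K u v) = madd K (msub K f u) (msub K g v)"
  unfolding msub_def using assms by (simp add: vsm_add vassoc vlcomm)

lemma subsp_sub: "subsp K C M \<Longrightarrow> x \<in> M \<Longrightarrow> y \<in> M \<Longrightarrow> msub K x y \<in> M"
  unfolding subsp_def msub_def by blast

lemma R_subsp: assumes loc: "local_endring K C"
  shows "subsp K C {f \<in> Hom K C C. \<not> iso_endo K C f}"
proof -
  have idnz: "idm K C \<noteq> mzero K C C" using loc unfolding local_endring_def by blast
  have z: "\<not> iso_endo K C (mzero K C C)"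
  proof
    assume "iso_endo K C (mzero K C C)"
    then obtain g where g: "g \<in> Hom K C C" "cmp K g (mzero K C C) = idm K C" unfolding iso_endo_def by blast
    have "cmp K g (mzero K C C) = mzero K C C" using cmp_zero_r C g by blast
    with g idnz show False by simp
  qed
  have sm: "\<not> iso_endo K C (msmult K a x)" if x: "x \<in> Hom K C C" "\<not> iso_endo K C x" for a x
  proof (cases "a = 0")
    case True then show ?thesis using z vsm0 x by simp
  next
    case False
    show ?thesis
    proof
      assume "iso_endo K C (msmult K a x)"
      then obtain g where g: "g \<in> Hom K C C" "cmp K g (msmult K a x) = idm K C" "cmp K (msmult K a x) g = idm K C"
        unfolding iso_endo_def by blast
      have "cmp K (msmult K a g) x = msmult K a (cmp K g x)" using cmp_smult_l C g x by blast
      also have "\<dots> = cmp K g (msmult K a x)" using cmp_smult_r C g x by metis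
      finally have 1: "cmp K (msmult K a g) x = idm K C" using g by simp
      have "cmp K x (msmult K a g) = msmult K a (cmp K x g)" using cmp_smult_r C g x by blast
      also have "\<dots> = cmp K (msmult K a x) g" using cmp_smult_l C g x by metis
      finally have 2: "cmp K x (msmult K a g) = idm K C" using g by simp
      have "iso_endo K C x" unfolding iso_endo_def using 1 2 x g by (intro conjI bexI[of _ "msmult K a g"]) auto
      with x show False by simp
    qed
  qed
  show ?thesis unfolding subsp_def using z sm loc unfolding local_endring_def by auto
qed

lemma exists_functional: assumes loc: "local_endring K C"
  shows "\<exists>\<phi>\<in>hom_dual K C C. \<phi> (idm K C) \<noteq> 0 \<and> (\<forall>f\<in>Hom K C C. \<not> iso_endo K C f \<longrightarrow> \<phi> f = 0)"
proof -
  define R where "R = {f \<in> Hom K C C. \<not> iso_endo K C f}"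
  have Rs: "subsp K C R" unfolding R_def by (rule R_subsp[OF loc])
  have idiso: "iso_endo K C (idm K C)" unfolding iso_endo_def using C id_l by auto
  define F where "F = {M. subsp K C M \<and> R \<subseteq> M \<and> idm K C \<notin> M}"
  have RF: "R \<in> F" unfolding F_def using Rs idiso R_def by auto
  have "\<exists>M\<in>F. \<forall>X\<in>F. M \<subseteq> X \<longrightarrow> X = M"
  proof (rule subset_Zorn_nonempty)
    show "F \<noteq> {}" using RF by blast
  next
    fix Ch assume ne: "Ch \<noteq> {}" and ch: "subset.chain F Ch"
    hence sub: "Ch \<subseteq> F" and tot: "\<forall>x\<in>Ch. \<forall>y\<in>Ch. x \<subseteq> y \<or> y \<subseteq> x"
      unfolding subset.chain_def by auto
    obtain M0 where M0: "M0 \<in> Ch" using ne by blast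
    have sp: "\<And>M. M \<in> Ch \<Longrightarrow> subsp K C M" using sub unfolding F_def by blast
    have "subsp K C (\<Union>Ch)"
      unfolding subsp_def
    proof (intro conjI ballI allI)
      show "\<Union> Ch \<subseteq> Hom K C C" using sp unfolding subsp_def by blast
      show "mzero K C C \<in> \<Union> Ch" using sp[OF M0] M0 unfolding subsp_def by blast
    next
      fix x y assume "x \<in> \<Union>Ch" "y \<in> \<Union>Ch"
      then obtain A B where AB: "A \<in> Ch" "B \<in> Ch" "x \<in> A" "y \<in> B" by blast
      show "madd K x y \<in> \<Union> Ch"
      proof (cases "A \<subseteq> B")
        case True thus ?thesis using sp[OF AB(2)] AB unfolding subsp_def by blast
      next
        case False hence "B \<subseteq> A" using tot AB by blast
        thus ?thesis using sp[OF AB(1)] AB unfolding subsp_def by blast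
      qed
    next
      fix a x assume "x \<in> \<Union>Ch"
      thus "msmult K a x \<in> \<Union> Ch" using sp unfolding subsp_def by blast
    qed
    moreover have "R \<subseteq> \<Union>Ch" using M0 sub unfolding F_def by blast
    moreover have "idm K C \<notin> \<Union>Ch" using sub unfolding F_def by blast
    ultimately show "\<Union>Ch \<in> F" unfolding F_def by blast
  qed
  then obtain M where MF: "M \<in> F" and Mmax: "\<forall>X\<in>F. M \<subseteq> X \<longrightarrow> X = M" by blast
  have Ms: "subsp K C M" and RM: "R \<subseteq> M" and idM: "idm K C \<notin> M" using MF unfolding F_def by auto
  have MV: "M \<subseteq> Hom K C C" and M0: "mzero K C C \<in> M" and Madd: "\<And>x y. x \<in> M \<Longrightarrow> y \<in> M \<Longrightarrow> madd K x y \<in> M"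
    and Msm: "\<And>a x. x \<in> M \<Longrightarrow> msmult K a x \<in> M" using Ms unfolding subsp_def by auto
  have ex: "\<exists>a. msub K f (msmult K a (idm K C)) \<in> M" if f: "f \<in> Hom K C C" for f
  proof (cases "f \<in> M")
    case True
    have "msub K f (msmult K 0 (idm K C)) = f" using f vsm0 msub_zero C by simp
    thus ?thesis using True by metis
  next
    case False
    define M' where "M' = {x. \<exists>m\<in>M. \<exists>b. x = madd K m (msmult K b f)}"
    have MM': "M \<subseteq> M'"
    proof
      fix m assume m: "m \<in> M"
      hence "m = madd K m (msmult K 0 f)" using f MV vsm0 vadd0 by auto
      thus "m \<in> M'" unfolding M'_def using m by blast
    qed
    have fM': "f \<in> M'"
    proof -
      have "f = madd K (mzero K C C) (msmult K 1 f)" using f vsm1 v0add by simp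
      thus ?thesis unfolding M'_def using M0 by blast
    qed
    have M's: "subsp K C M'"
      unfolding subsp_def
    proof (intro conjI ballI allI)
      show "M' \<subseteq> Hom K C C" unfolding M'_def using MV f by auto
      show "mzero K C C \<in> M'" using MM' M0 by blast
    next
      fix x y assume "x \<in> M'" "y \<in> M'"
      then obtain m1 b1 m2 b2 where xy: "m1 \<in> M" "m2 \<in> M" "x = madd K m1 (msmult K b1 f)" "y = madd K m2 (msmult K b2 f)"
        unfolding M'_def by blast
      have "madd K x y = madd K (madd K m1 m2) (msmult K (b1 + b2) f)"
        using xy MV f by (simp add: vadd_sm vassoc vlcomm subset_iff)
      thus "madd K x y \<in> M'" unfolding M'_def using Madd xy by blast
    next
      fix a x assume "x \<in> M'"
      then obtain m b where xy: "m \<in> M" "x = madd K m (msmult K b f)" unfolding M'_def by blast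
      have "msmult K a x = madd K (msmult K a m) (msmult K (a * b) f)"
        using xy MV f by (simp add: vsm_add vsm_sm subset_iff)
      thus "msmult K a x \<in> M'" unfolding M'_def using Msm xy by blast
    qed
    have "idm K C \<in> M'"
    proof (rule ccontr)
      assume "idm K C \<notin> M'"
      hence "M' \<in> F" unfolding F_def using M's RM MM' by blast
      hence "M' = M" using Mmax MM' by blast
      thus False using fM' False by blast
    qed
    then obtain m b where mb: "m \<in> M" "idm K C = madd K m (msmult K b f)" unfolding M'_def by blast
    have mV: "m \<in> Hom K C C" using mb MV by blast
    have b0: "b \<noteq> 0"
    proof
      assume "b = 0"
      hence "idm K C = m" using mb mV f vsm0 vadd0 by simp
      thus False using mb idM by simp
    qed
    have "msmult K (inverse b) (idm K C) = madd K (msmult K (inverse b) m) f"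
      using mb(2) mV f b0 by (simp add: vsm_add vsm_sm vsm1)
    hence "msub K f (msmult K (inverse b) (idm K C)) = msmult K (-1) (msmult K (inverse b) m)"
      unfolding msub_def using mV f by (simp add: vsm_add canc2)
    thus ?thesis using Msm mb(1) by metis
  qed
  have uniq: "a = b" if f: "f \<in> Hom K C C" and a: "msub K f (msmult K a (idm K C)) \<in> M"
    and b: "msub K f (msmult K b (idm K C)) \<in> M" for f a b
  proof (rule ccontr)
    assume ab: "a \<noteq> b"
    have "msub K (msub K f (msmult K b (idm K C))) (msub K f (msmult K a (idm K C))) = msmult K (a - b) (idm K C)"
      unfolding msub_def using f
      apply (simp add: vsm_add vsm_sm canc1)
      apply (subst vadd_sm[symmetric], simp)
      apply simp
      done
    hence "msmult K (a - b) (idm K C) \<in> M" using subsp_sub[OF Ms b a] by simp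
    hence "msmult K (inverse (a - b)) (msmult K (a - b) (idm K C)) \<in> M" using Msm by blast
    hence "idm K C \<in> M" using ab by (simp add: vsm_sm vsm1)
    thus False using idM by simp
  qed
  define \<phi> where "\<phi> f = (if f \<in> Hom K C C then (THE a. msub K f (msmult K a (idm K C)) \<in> M) else 0)" for f
  have phiM: "msub K f (msmult K (\<phi> f) (idm K C)) \<in> M" if f: "f \<in> Hom K C C" for f
  proof -
    obtain a where a: "msub K f (msmult K a (idm K C)) \<in> M" using ex[OF f] by blast
    have "(THE a. msub K f (msmult K a (idm K C)) \<in> M) = a"
      using a uniq[OF f] by (intro the_equality) auto
    thus ?thesis using a f unfolding \<phi>_def by simp
  qed
  have phiE: "\<phi> f = a" if f: "f \<in> Hom K C C" and a: "msub K f (msmult K a (idm K C)) \<in> M" for f a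
    using uniq[OF f phiM[OF f] a] .
  have "\<phi> \<in> hom_dual K C C"
    unfolding hom_dual_def
  proof (intro CollectI conjI ballI allI impI)
    fix h h' assume h: "h \<in> Hom K C C" and h': "h' \<in> Hom K C C"
    have "msub K (madd K h h') (msmult K (\<phi> h + \<phi> h') (idm K C)) =
          madd K (msub K h (msmult K (\<phi> h) (idm K C))) (msub K h' (msmult K (\<phi> h') (idm K C)))"
      using h h' by (simp add: vadd_sm vsub_add2)
    hence "msub K (madd K h h') (msmult K (\<phi> h + \<phi> h') (idm K C)) \<in> M"
      using Madd phiM h h' by simp
    thus "\<phi> (madd K h h') = \<phi> h + \<phi> h'" using phiE h h' by simp
  next
    fix a h assume h: "h \<in> Hom K C C"
    have "msub K (msmult K a h) (msmult K (a * \<phi> h) (idm K C)) = msmult K a (msub K h (msmult K (\<phi> h) (idm K C)))"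
      unfolding msub_def using h by (simp add: vsm_add vsm_sm mult_ac)
    hence "msub K (msmult K a h) (msmult K (a * \<phi> h) (idm K C)) \<in> M" using Msm phiM h by simp
    thus "\<phi> (msmult K a h) = a * \<phi> h" using phiE h by simp
  next
    fix h assume "h \<notin> Hom K C C" thus "\<phi> h = 0" unfolding \<phi>_def by simp
  qed
  moreover have "\<phi> (idm K C) = 1"
  proof -
    have "msub K (idm K C) (msmult K 1 (idm K C)) = mzero K C C" using msub_self C id_hom vsm1 by simp
    thus ?thesis using phiE M0 by simp
  qed
  moreover have "\<phi> f = 0" if f: "f \<in> Hom K C C" "\<not> iso_endo K C f" for f
  proof -
    have "f \<in> M" using RM f R_def by blast
    moreover have "msub K f (msmult K 0 (idm K C)) = f" using f vsm0 msub_zero C by simp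
    ultimately show ?thesis using phiE f by simp
  qed
  ultimately show ?thesis by (intro bexI[of _ \<phi>]) auto
qed

end
end



lemma ex1_two: "\<exists>!u. P u \<Longrightarrow> P a \<Longrightarrow> P b \<Longrightarrow> a = b" by blast

lemma is_kernelD: assumes "is_kernel K N X Y k f"
  shows "N \<in> Ob K" "k \<in> Hom K N X" "f \<in> Hom K X Y" "cmp K f k = mzero K N Y"
    "\<And>W h. W \<in> Ob K \<Longrightarrow> h \<in> Hom K W X \<Longrightarrow> cmp K f h = mzero K W Y \<Longrightarrow> \<exists>!u. u \<in> Hom K W N \<and> cmp K k u = h"
  using assms unfolding is_kernel_def by simp_all

lemma is_cokernelD: assumes "is_cokernel K X Y Q c f"
  shows "Q \<in> Ob K" "f \<in> Hom K X Y" "c \<in> Hom K Y Q" "cmp K c f = mzero K X Q"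
    "\<And>W h. W \<in> Ob K \<Longrightarrow> h \<in> Hom K Y W \<Longrightarrow> cmp K h f = mzero K X W \<Longrightarrow> \<exists>!u. u \<in> Hom K Q W \<and> cmp K u c = h"
  using assms unfolding is_cokernel_def by simp_all

context KL begin

lemma kernel_mono: assumes k: "is_kernel K N X Y k f" and X: "X \<in> Ob K" and Y: "Y \<in> Ob K"
  and W: "W \<in> Ob K" and g: "g \<in> Hom K W N" and h: "h \<in> Hom K W N" and eq: "cmp K k g = cmp K k h"
  shows "g = h"
proof -
  note kd = is_kernelD[OF k]
  have kg: "cmp K k g \<in> Hom K W X" using cmp_hom W kd(1) X g kd(2) by blast
  have "cmp K f (cmp K k g) = cmp K (cmp K f k) g" using assoc[OF W kd(1) X Y g kd(2) kd(3)] .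
  also have "\<dots> = mzero K W Y" using kd(4) cmp_zero_l[OF W kd(1) Y g] by simp
  finally have "\<exists>!u. u \<in> Hom K W N \<and> cmp K k u = cmp K k g" by (rule kd(5)[OF W kg])
  thus ?thesis by (rule ex1_two) (use g h eq in simp_all)
qed

lemma coker_epi: assumes c: "is_cokernel K X Y Q c f" and X: "X \<in> Ob K" and Y: "Y \<in> Ob K"
  shows "epi K Y Q c"
  unfolding epi_def
proof (intro conjI ballI impI)
  note cd = is_cokernelD[OF c]
  show "c \<in> Hom K Y Q" by (rule cd(3))
  fix W g h assume W: "W \<in> Ob K" and g: "g \<in> Hom K Q W" and h: "h \<in> Hom K Q W" and eq: "cmp K g c = cmp K h c"
  have gc: "cmp K g c \<in> Hom K Y W" using cmp_hom W cd(1) Y g cd(3) by blast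
  have "cmp K (cmp K g c) f = cmp K g (cmp K c f)" using assoc[OF X Y cd(1) W cd(2) cd(3) g] by simp
  also have "\<dots> = mzero K X W" using cd(4) cmp_zero_r[OF X cd(1) W g] by simp
  finally have "\<exists>!u. u \<in> Hom K Q W \<and> cmp K u c = cmp K g c" by (rule cd(5)[OF W gc])
  thus "g = h" by (rule ex1_two) (use g h eq in simp_all)
qed

end

context fixes K :: "('o,'m,'k::field) kcat" assumes KA: "klinear_category K" "abelian K" begin

interpretation KL K by (unfold_locales) (rule KA(1))

lemma mono_factor: assumes m: "mono K X Y m" and c: "is_cokernel K X Y Q c m"
  and X: "X \<in> Ob K" and Y: "Y \<in> Ob K" and W: "W \<in> Ob K" and h: "h \<in> Hom K W Y"
  and ch0: "cmp K c h = mzero K W Q"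
  shows "\<exists>u\<in>Hom K W X. cmp K m u = h"
proof -
  have "\<forall>X\<in>Ob K. \<forall>Y\<in>Ob K. \<forall>f. mono K X Y f \<longrightarrow> (\<exists>Z\<in>Ob K. \<exists>g. is_kernel K X Y Z f g)"
    using KA(2) unfolding abelian_def by blast
  then obtain Z g where Z: "Z \<in> Ob K" and kg: "is_kernel K X Y Z m g"
    using m X Y by blast
  note kd = is_kernelD[OF kg] and cd = is_cokernelD[OF c]
  have "\<exists>!u. u \<in> Hom K Q Z \<and> cmp K u c = g" using cd(5)[OF Z kd(3) kd(4)] .
  then obtain u where u: "u \<in> Hom K Q Z" "cmp K u c = g" by (auto dest: ex1_implies_ex)
  have "cmp K g h = cmp K u (cmp K c h)" using assoc[OF W Y cd(1) Z h cd(3) u(1)] u(2) by simp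
  also have "\<dots> = mzero K W Z" using ch0 cmp_zero_r[OF W cd(1) Z u(1)] by simp
  finally have "\<exists>!u. u \<in> Hom K W X \<and> cmp K m u = h" by (rule kd(5)[OF W h])
  thus ?thesis by (auto dest: ex1_implies_ex)
qed

lemma pullback: assumes X: "X \<in> Ob K" and Cc: "C \<in> Ob K" and Z: "Z \<in> Ob K"
  and p: "epi K X Z p" and e: "e \<in> Hom K C Z"
  shows "\<exists>B a g. B \<in> Ob K \<and> a \<in> Hom K B X \<and> g \<in> Hom K B C \<and> cmp K p a = cmp K e g \<and>
    (\<forall>Y\<in>Ob K. \<forall>x\<in>Hom K Y X. \<forall>y\<in>Hom K Y C. cmp K p x = cmp K e y \<longrightarrow>
        (\<exists>u\<in>Hom K Y B. cmp K a u = x \<and> cmp K g u = y)) \<and>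
    (\<forall>Y\<in>Ob K. \<forall>u1\<in>Hom K Y B. \<forall>u2\<in>Hom K Y B. cmp K a u1 = cmp K a u2 \<longrightarrow> cmp K g u1 = cmp K g u2 \<longrightarrow> u1 = u2) \<and>
    epi K B C g"
proof -
  have ph: "p \<in> Hom K X Z" and pe: "\<And>W g h. W \<in> Ob K \<Longrightarrow> g \<in> Hom K Z W \<Longrightarrow> h \<in> Hom K Z W \<Longrightarrow> cmp K g p = cmp K h p \<Longrightarrow> g = h"
    using p unfolding epi_def by blast+
  have "\<forall>X\<in>Ob K. \<forall>Y\<in>Ob K. \<exists>P\<in>Ob K. \<exists>i1 i2 p1 p2.
        i1 \<in> Hom K X P \<and> i2 \<in> Hom K Y P \<and> p1 \<in> Hom K P X \<and> p2 \<in> Hom K P Y \<and>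
        cmp K p1 i1 = idm K X \<and> cmp K p2 i2 = idm K Y \<and>
        cmp K p1 i2 = mzero K Y X \<and> cmp K p2 i1 = mzero K X Y \<and>
        madd K (cmp K i1 p1) (cmp K i2 p2) = idm K P"
    using KA(2) unfolding abelian_def by blast
  then obtain P i1 i2 p1 p2 where P: "P \<in> Ob K" and i1: "i1 \<in> Hom K X P" and i2: "i2 \<in> Hom K C P"
    and p1: "p1 \<in> Hom K P X" and p2: "p2 \<in> Hom K P C" and p1i1: "cmp K p1 i1 = idm K X"
    and p2i2: "cmp K p2 i2 = idm K C" and p1i2: "cmp K p1 i2 = mzero K C X" and p2i1: "cmp K p2 i1 = mzero K X C"
    and sum: "madd K (cmp K i1 p1) (cmp K i2 p2) = idm K P"
    using X Cc by blast
  have KC: "\<forall>X\<in>Ob K. \<forall>Y\<in>Ob K. \<forall>f\<in>Hom K X Y. (\<exists>N k. is_kernel K N X Y k f) \<and> (\<exists>Q c. is_cokernel K X Y Q c f)"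
    using KA(2) unfolding abelian_def by blast
  have pp1: "cmp K p p1 \<in> Hom K P Z" using cmp_hom P X Z p1 ph by blast
  have ep2: "cmp K e p2 \<in> Hom K P Z" using cmp_hom P Cc Z p2 e by blast
  define \<sigma> where "\<sigma> = msub K (cmp K p p1) (cmp K e p2)"
  have sh: "\<sigma> \<in> Hom K P Z" unfolding \<sigma>_def using msub_hom P Z pp1 ep2 by blast
  obtain B k where kk: "is_kernel K B P Z k \<sigma>" using KC P Z sh by blast
  note kd = is_kernelD[OF kk]
  have B: "B \<in> Ob K" and kh: "k \<in> Hom K B P" using kd by auto
  define a where "a = cmp K p1 k"
  define g where "g = cmp K p2 k"
  have ah: "a \<in> Hom K B X" unfolding a_def using cmp_hom B P X kh p1 by blast
  have gh: "g \<in> Hom K B C" unfolding g_def using cmp_hom B P Cc kh p2 by blast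
  have sig: "cmp K \<sigma> v = msub K (cmp K p (cmp K p1 v)) (cmp K e (cmp K p2 v))" if Y: "Y \<in> Ob K" and v: "v \<in> Hom K Y P" for Y v
  proof -
    have "cmp K \<sigma> v = msub K (cmp K (cmp K p p1) v) (cmp K (cmp K e p2) v)"
      unfolding \<sigma>_def using cmp_msub_l[OF Y P Z v pp1 ep2] .
    also have "\<dots> = msub K (cmp K p (cmp K p1 v)) (cmp K e (cmp K p2 v))"
      using assoc[OF Y P X Z v p1 ph] assoc[OF Y P Cc Z v p2 e] by simp
    finally show ?thesis .
  qed
  have decomp: "v = madd K (cmp K i1 (cmp K p1 v)) (cmp K i2 (cmp K p2 v))" if Y: "Y \<in> Ob K" and v: "v \<in> Hom K Y P" for Y v
  proof -
    have i1p1: "cmp K i1 p1 \<in> Hom K P P" using cmp_hom P X p1 i1 by blast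
    have i2p2: "cmp K i2 p2 \<in> Hom K P P" using cmp_hom P Cc p2 i2 by blast
    have "v = cmp K (idm K P) v" using id_l[OF Y P v] by simp
    also have "\<dots> = madd K (cmp K (cmp K i1 p1) v) (cmp K (cmp K i2 p2) v)"
      using sum cmp_add_l[OF Y P P v i1p1 i2p2] by simp
    also have "\<dots> = madd K (cmp K i1 (cmp K p1 v)) (cmp K i2 (cmp K p2 v))"
      using assoc[OF Y P X P v p1 i1] assoc[OF Y P Cc P v p2 i2] by simp
    finally show ?thesis .
  qed
  have pa: "cmp K p a = cmp K e g"
  proof -
    have "msub K (cmp K p a) (cmp K e g) = mzero K B Z"
      using sig[OF B kh] kd(4) unfolding a_def g_def by simp
    moreover have "cmp K p a \<in> Hom K B Z" using cmp_hom B X Z ah ph by blast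
    moreover have "cmp K e g \<in> Hom K B Z" using cmp_hom B Cc Z gh e by blast
    ultimately show ?thesis using msub_eq0 B Z by blast
  qed
  have univ: "\<exists>u\<in>Hom K Y B. cmp K a u = x \<and> cmp K g u = y"
    if Y: "Y \<in> Ob K" and x: "x \<in> Hom K Y X" and y: "y \<in> Hom K Y C" and eq: "cmp K p x = cmp K e y" for Y x y
  proof -
    have i1x: "cmp K i1 x \<in> Hom K Y P" using cmp_hom Y X P x i1 by blast
    have i2y: "cmp K i2 y \<in> Hom K Y P" using cmp_hom Y Cc P y i2 by blast
    define w where "w = madd K (cmp K i1 x) (cmp K i2 y)"
    have wh: "w \<in> Hom K Y P" unfolding w_def using add_hom Y P i1x i2y by blast
    have "cmp K p1 w = madd K (cmp K p1 (cmp K i1 x)) (cmp K p1 (cmp K i2 y))"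
      unfolding w_def using cmp_add_r[OF Y P X i1x i2y p1] .
    also have "\<dots> = madd K (cmp K (cmp K p1 i1) x) (cmp K (cmp K p1 i2) y)"
      using assoc[OF Y X P X x i1 p1] assoc[OF Y Cc P X y i2 p1] by simp
    also have "\<dots> = x" using p1i1 p1i2 id_l[OF Y X x] cmp_zero_l[OF Y Cc X y] add_zero[OF Y X x] by simp
    finally have w1: "cmp K p1 w = x" .
    have "cmp K p2 w = madd K (cmp K p2 (cmp K i1 x)) (cmp K p2 (cmp K i2 y))"
      unfolding w_def using cmp_add_r[OF Y P Cc i1x i2y p2] .
    also have "\<dots> = madd K (cmp K (cmp K p2 i1) x) (cmp K (cmp K p2 i2) y)"
      using assoc[OF Y X P Cc x i1 p2] assoc[OF Y Cc P Cc y i2 p2] by simp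
    also have "\<dots> = y" using p2i1 p2i2 id_l[OF Y Cc y] cmp_zero_l[OF Y X Cc x] zero_add[OF Y Cc y] by simp
    finally have w2: "cmp K p2 w = y" .
    have px: "cmp K p x \<in> Hom K Y Z" using cmp_hom Y X Z x ph by blast
    have "cmp K \<sigma> w = mzero K Y Z" using sig[OF Y wh] w1 w2 eq msub_self[OF Y Z px] by simp
    hence "\<exists>!u. u \<in> Hom K Y B \<and> cmp K k u = w" by (rule kd(5)[OF Y wh])
    then obtain u where u: "u \<in> Hom K Y B" "cmp K k u = w" by (auto dest: ex1_implies_ex)
    have "cmp K a u = x" unfolding a_def using assoc[OF Y B P X u(1) kh p1] u w1 by simp
    moreover have "cmp K g u = y" unfolding g_def using assoc[OF Y B P Cc u(1) kh p2] u w2 by simp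
    ultimately show ?thesis using u by blast
  qed
  have jm: "u1 = u2" if Y: "Y \<in> Ob K" and u1: "u1 \<in> Hom K Y B" and u2: "u2 \<in> Hom K Y B"
    and e1: "cmp K a u1 = cmp K a u2" and e2: "cmp K g u1 = cmp K g u2" for Y u1 u2
  proof -
    have ku1: "cmp K k u1 \<in> Hom K Y P" using cmp_hom Y B P u1 kh by blast
    have ku2: "cmp K k u2 \<in> Hom K Y P" using cmp_hom Y B P u2 kh by blast
    have "cmp K k u1 = madd K (cmp K i1 (cmp K p1 (cmp K k u1))) (cmp K i2 (cmp K p2 (cmp K k u1)))"
      using decomp[OF Y ku1] .
    also have "\<dots> = madd K (cmp K i1 (cmp K a u1)) (cmp K i2 (cmp K g u1))"
      unfolding a_def g_def using assoc[OF Y B P X u1 kh p1] assoc[OF Y B P Cc u1 kh p2] by simp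
    also have "\<dots> = madd K (cmp K i1 (cmp K a u2)) (cmp K i2 (cmp K g u2))" using e1 e2 by simp
    also have "\<dots> = madd K (cmp K i1 (cmp K p1 (cmp K k u2))) (cmp K i2 (cmp K p2 (cmp K k u2)))"
      unfolding a_def g_def using assoc[OF Y B P X u2 kh p1] assoc[OF Y B P Cc u2 kh p2] by simp
    also have "\<dots> = cmp K k u2" using decomp[OF Y ku2] by simp
    finally show ?thesis using kernel_mono[OF kk P Z Y u1 u2] by simp
  qed
  have sepi: "epi K P Z \<sigma>"
    unfolding epi_def
  proof (intro conjI ballI impI)
    show "\<sigma> \<in> Hom K P Z" by fact
    fix W \<alpha> \<beta> assume W: "W \<in> Ob K" and al: "\<alpha> \<in> Hom K Z W" and be: "\<beta> \<in> Hom K Z W" and eq: "cmp K \<alpha> \<sigma> = cmp K \<beta> \<sigma>"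
    have si1: "cmp K \<sigma> i1 = p"
    proof -
      have "cmp K \<sigma> i1 = msub K (cmp K p (cmp K p1 i1)) (cmp K e (cmp K p2 i1))" using sig[OF X i1] .
      also have "\<dots> = p" using p1i1 p2i1 id_r[OF X Z ph] cmp_zero_r[OF X Cc Z e] msub_zero[OF X Z ph] by simp
      finally show ?thesis .
    qed
    have "cmp K \<alpha> p = cmp K \<beta> p"
      using si1 eq assoc[OF X P Z W i1 sh al] assoc[OF X P Z W i1 sh be] by metis
    thus "\<alpha> = \<beta>" using pe W al be by blast
  qed
  have gepi: "epi K B C g"
    unfolding epi_def
  proof (intro conjI ballI impI)
    show "g \<in> Hom K B C" by fact
    fix W t1 t2 assume W: "W \<in> Ob K" and t1: "t1 \<in> Hom K C W" and t2: "t2 \<in> Hom K C W" and eq: "cmp K t1 g = cmp K t2 g"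
    define t where "t = msub K t1 t2"
    have th: "t \<in> Hom K C W" unfolding t_def using msub_hom Cc W t1 t2 by blast
    have tg: "cmp K t g = mzero K B W"
      unfolding t_def using cmp_msub_l[OF B Cc W gh t1 t2] eq msub_self[OF B W] cmp_hom[OF B Cc W gh t2] by simp
    have tp2: "cmp K t p2 \<in> Hom K P W" using cmp_hom P Cc W p2 th by blast
    have "\<forall>X\<in>Ob K. \<forall>Y\<in>Ob K. \<forall>f. epi K X Y f \<longrightarrow> (\<exists>Z\<in>Ob K. \<exists>g. is_cokernel K Z X Y f g)"
      using KA(2) unfolding abelian_def by blast
    then obtain Z0 z where Z0: "Z0 \<in> Ob K" and zc: "is_cokernel K Z0 P Z \<sigma> z" using sepi P Z by blast
    note zd = is_cokernelD[OF zc]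
    have "\<exists>!u. u \<in> Hom K Z0 B \<and> cmp K k u = z" by (rule kd(5)[OF Z0 zd(2) zd(4)])
    then obtain w where w: "w \<in> Hom K Z0 B" "cmp K k w = z" by (auto dest: ex1_implies_ex)
    have "cmp K (cmp K t p2) z = cmp K (cmp K t g) w"
      unfolding g_def using w assoc[OF Z0 B P W w(1) kh tp2] assoc[OF B P Cc W kh p2 th] by simp
    also have "\<dots> = mzero K Z0 W" using tg cmp_zero_l[OF Z0 B W w(1)] by simp
    finally have "\<exists>!v. v \<in> Hom K Z W \<and> cmp K v \<sigma> = cmp K t p2" by (rule zd(5)[OF W tp2])
    then obtain v where v: "v \<in> Hom K Z W" "cmp K v \<sigma> = cmp K t p2" by (auto dest: ex1_implies_ex)
    have si1: "cmp K \<sigma> i1 = p"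
    proof -
      have "cmp K \<sigma> i1 = msub K (cmp K p (cmp K p1 i1)) (cmp K e (cmp K p2 i1))" using sig[OF X i1] .
      also have "\<dots> = p" using p1i1 p2i1 id_r[OF X Z ph] cmp_zero_r[OF X Cc Z e] msub_zero[OF X Z ph] by simp
      finally show ?thesis .
    qed
    have "cmp K v p = cmp K (cmp K t p2) i1" using si1 v(2) assoc[OF X P Z W i1 sh v(1)] by simp
    also have "\<dots> = cmp K t (cmp K p2 i1)" using assoc[OF X P Cc W i1 p2 th] by simp
    also have "\<dots> = mzero K X W" using p2i1 cmp_zero_r[OF X Cc W th] by simp
    also have "\<dots> = cmp K (mzero K Z W) p" using cmp_zero_l[OF X Z W ph] by simp
    finally have "v = mzero K Z W" using pe[OF W v(1) zero_hom[OF Z W]] by simp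
    hence "cmp K t p2 = mzero K P W" using v(2) cmp_zero_l[OF P Z W sh] by simp
    hence "cmp K (cmp K t p2) i2 = mzero K C W" using cmp_zero_l[OF Cc P W i2] by simp
    hence "cmp K t (cmp K p2 i2) = mzero K C W" using assoc[OF Cc P Cc W i2 p2 th] by simp
    hence "t = mzero K C W" using p2i2 id_r[OF Cc W th] by simp
    thus "t1 = t2" unfolding t_def using msub_eq0[OF Cc W t1 t2] by simp
  qed
  show ?thesis
    apply (rule exI[of _ B], rule exI[of _ a], rule exI[of _ g])
    using B ah gh pa univ jm gepi by blast
qed

end



context KL begin
lemma add_msub_cancel: assumes "X \<in> Ob K" "Y \<in> Ob K" "f \<in> Hom K X Y" "e \<in> Hom K X Y"
  shows "madd K (msub K f e) e = f"
proof -
  have ne: "msmult K (-1) e \<in> Hom K X Y" using smult_hom assms by blast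
  have "madd K (msub K f e) e = madd K f (madd K (msmult K (-1) e) e)"
    unfolding msub_def using add_assoc[OF assms(1,2,3) ne assms(4)] .
  also have "\<dots> = f" using neg_add[OF assms(1,2,4)] add_zero[OF assms(1,2,3)] by simp
  finally show ?thesis .
qed

lemma cob_closed: assumes X: "X \<in> Ob K" and U: "U \<in> Ob K" and V: "V \<in> Ob K" and D: "D \<in> Hom K U V"
  and c1: "c1 \<in> {cmp K D g | g. g \<in> Hom K X U}" and c2: "c2 \<in> {cmp K D g | g. g \<in> Hom K X U}"
  shows "msub K c1 c2 \<in> {cmp K D g | g. g \<in> Hom K X U}" "madd K c1 c2 \<in> {cmp K D g | g. g \<in> Hom K X U}"
proof -
  obtain g1 g2 where g: "g1 \<in> Hom K X U" "g2 \<in> Hom K X U" "c1 = cmp K D g1" "c2 = cmp K D g2" using c1 c2 by blast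
  have "msub K c1 c2 = cmp K D (msub K g1 g2)" using cmp_msub_r[OF X U V g(1,2) D] g by simp
  thus "msub K c1 c2 \<in> {cmp K D g | g. g \<in> Hom K X U}" using msub_hom[OF X U g(1,2)] by blast
  have "madd K c1 c2 = cmp K D (madd K g1 g2)" using cmp_add_r[OF X U V g(1,2) D] g by simp
  thus "madd K c1 c2 \<in> {cmp K D g | g. g \<in> Hom K X U}" using add_hom[OF X U g(1,2)] by blast
qed
end

theorem proposition1p1:
  fixes K :: "('o, 'm, 'k::field) kcat"
    and A C :: 'o
    and d :: nat
    and S I :: "nat \<Rightarrow> 'o"
    and \<iota> \<pi> :: "nat \<Rightarrow> 'm"
    and \<eta> :: "'o \<Rightarrow> ('m \<Rightarrow> 'k) \<Rightarrow> 'm set"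
  assumes "klinear_abelian_enough_inj K"
    and "C \<in> Ob K" and "A \<in> Ob K"
    and "local_endring K C"
    and "d \<ge> 1"
    and "inj_resolution K A S I \<iota> \<pi>"
    and "nat_equiv_dual_ext K C I \<iota> \<pi> d \<eta>"
  shows "\<exists>B f g. B \<in> Ob K \<and> f \<in> Hom K (S (d - 1)) B \<and> g \<in> Hom K B C \<and>
           is_kernel K (S (d - 1)) B C f g \<and> epi K B C g \<and>
           right_almost_split K B C g"
proof -
  have KL: "klinear_category K" and AB: "abelian K" using assms(1) unfolding klinear_abelian_enough_inj_def by auto
  interpret KL K by unfold_locales (rule KL)
  have Cc: "C \<in> Ob K" by (rule assms(2))
  have SO: "\<And>n. S n \<in> Ob K" and IO: "\<And>n. I n \<in> Ob K" and mon: "\<And>n. mono K (S n) (I n) (\<iota> n)"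
    and cok: "\<And>n. is_cokernel K (S n) (I n) (S (Suc n)) (\<pi> n) (\<iota> n)"
    using assms(6) unfolding inj_resolution_def injective_obj_def by blast+
  have \<iota>h: "\<And>n. \<iota> n \<in> Hom K (S n) (I n)" using mon unfolding mono_def by blast
  have \<pi>h: "\<And>n. \<pi> n \<in> Hom K (I n) (S (Suc n))" using cok unfolding is_cokernel_def by blast
  have \<pi>\<iota>: "\<And>n. cmp K (\<pi> n) (\<iota> n) = mzero K (S n) (S (Suc n))" using cok unfolding is_cokernel_def by blast
  have monD: "\<And>n W u v. W \<in> Ob K \<Longrightarrow> u \<in> Hom K W (S n) \<Longrightarrow> v \<in> Hom K W (S n) \<Longrightarrow> cmp K (\<iota> n) u = cmp K (\<iota> n) v \<Longrightarrow> u = v"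
    using mon unfolding mono_def by blast
  define d' where "d' = d - 1"
  have dd: "Suc d' = d" unfolding d'_def using assms(5) by simp
  have rd: "\<And>n. res_diff K \<iota> \<pi> n = cmp K (\<iota> (Suc n)) (\<pi> n)" unfolding res_diff_def by simp
  have rdh: "\<And>n. res_diff K \<iota> \<pi> n \<in> Hom K (I n) (I (Suc n))" unfolding res_diff_def
    using cmp_hom IO SO \<iota>h \<pi>h by blast
  note NE = assms(7)[unfolded nat_equiv_dual_ext_def]
  have bij: "\<And>X. X \<in> Ob K \<Longrightarrow> bij_betw (\<eta> X) (hom_dual K C X) (Ext K I \<iota> \<pi> d X)" using NE by blast
  have lin: "\<And>X \<phi> \<psi> a b f g. X \<in> Ob K \<Longrightarrow> \<phi> \<in> hom_dual K C X \<Longrightarrow> \<psi> \<in> hom_dual K C X \<Longrightarrow>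
           f \<in> ext_cocycles K I \<iota> \<pi> d X \<Longrightarrow> g \<in> ext_cocycles K I \<iota> \<pi> d X \<Longrightarrow>
           \<eta> X \<phi> = ext_class K I \<iota> \<pi> d X f \<Longrightarrow> \<eta> X \<psi> = ext_class K I \<iota> \<pi> d X g \<Longrightarrow>
           \<eta> X (\<lambda>h. a * \<phi> h + b * \<psi> h) =
             ext_class K I \<iota> \<pi> d X (madd K (msmult K a f) (msmult K b g))"
    using NE by blast
  have nat: "\<And>X Y u \<phi> f. X \<in> Ob K \<Longrightarrow> Y \<in> Ob K \<Longrightarrow> u \<in> Hom K X Y \<Longrightarrow> \<phi> \<in> hom_dual K C Y \<Longrightarrow>
        f \<in> ext_cocycles K I \<iota> \<pi> d Y \<Longrightarrow>
        \<eta> Y \<phi> = ext_class K I \<iota> \<pi> d Y f \<Longrightarrow>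
        \<eta> X (hom_dual_map K C X u \<phi>) = ext_class K I \<iota> \<pi> d X (cmp K f u)"
    using NE by blast
  have zd: "\<And>X. (\<lambda>h. 0) \<in> hom_dual K C X" unfolding hom_dual_def by simp
  have eta0: "\<eta> X (\<lambda>h. 0) = ext_class K I \<iota> \<pi> d X (mzero K X (I d))" if X: "X \<in> Ob K" for X
  proof -
    have "\<eta> X (\<lambda>h. 0) \<in> Ext K I \<iota> \<pi> d X" using bij[OF X] zd unfolding bij_betw_def by blast
    then obtain f0 where f0: "f0 \<in> ext_cocycles K I \<iota> \<pi> d X" "\<eta> X (\<lambda>h. 0) = ext_class K I \<iota> \<pi> d X f0"
      unfolding Ext_def by blast
    have f0h: "f0 \<in> Hom K X (I d)" using f0 unfolding ext_cocycles_def by blast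
    have "\<eta> X (\<lambda>h. 0 * 0 + 0 * 0) = ext_class K I \<iota> \<pi> d X (madd K (msmult K 0 f0) (msmult K 0 f0))"
      using lin[OF X zd zd f0(1) f0(1) f0(2) f0(2)] by simp
    thus ?thesis using smult_zero_scalar[OF X IO f0h] add_zero[OF X IO zero_hom[OF X IO]] by simp
  qed
  have cls0: "ext_class K I \<iota> \<pi> d X e = ext_class K I \<iota> \<pi> d X (mzero K X (I d))"
    if X: "X \<in> Ob K" and eh: "e \<in> Hom K X (I d)" and ec: "e \<in> ext_coboundaries K I \<iota> \<pi> d X" for X e
  proof -
    have rdh': "res_diff K \<iota> \<pi> (d - 1) \<in> Hom K (I (d - 1)) (I d)" using rdh[of "d - 1"] dd unfolding d'_def by simp
    note cc = cob_closed[OF X IO[of "d - 1"] IO[of d] rdh']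
    have cobeq: "ext_coboundaries K I \<iota> \<pi> d X = {cmp K (res_diff K \<iota> \<pi> (d - 1)) g | g. g \<in> Hom K X (I (d - 1))}"
      unfolding ext_coboundaries_def by simp
    show ?thesis
      unfolding ext_class_def
    proof (intro Collect_cong conj_cong refl iffI)
      fix f' assume f': "f' \<in> ext_cocycles K I \<iota> \<pi> d X" and m: "msub K f' e \<in> ext_coboundaries K I \<iota> \<pi> d X"
      have f'h: "f' \<in> Hom K X (I d)" using f' unfolding ext_cocycles_def by blast
      have "madd K (msub K f' e) e \<in> ext_coboundaries K I \<iota> \<pi> d X" using cc(2) m ec cobeq by simp
      thus "msub K f' (mzero K X (I d)) \<in> ext_coboundaries K I \<iota> \<pi> d X"
        using add_msub_cancel[OF X IO f'h eh] msub_zero[OF X IO f'h] by simp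
    next
      fix f' assume f': "f' \<in> ext_cocycles K I \<iota> \<pi> d X" and m: "msub K f' (mzero K X (I d)) \<in> ext_coboundaries K I \<iota> \<pi> d X"
      have f'h: "f' \<in> Hom K X (I d)" using f' unfolding ext_cocycles_def by blast
      show "msub K f' e \<in> ext_coboundaries K I \<iota> \<pi> d X"
        using cc(1) m ec cobeq msub_zero[OF X IO f'h] by simp
    qed
  qed

  obtain \<phi> where \<phi>: "\<phi> \<in> hom_dual K C C" "\<phi> (idm K C) \<noteq> 0"
    and \<phi>0: "\<And>f. f \<in> Hom K C C \<Longrightarrow> \<not> iso_endo K C f \<Longrightarrow> \<phi> f = 0"
    using exists_functional[OF Cc assms(4)] by blast
  have "\<eta> C \<phi> \<in> Ext K I \<iota> \<pi> d C" using bij[OF Cc] \<phi>(1) unfolding bij_betw_def by blast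
  then obtain e where ec: "e \<in> ext_cocycles K I \<iota> \<pi> d C" and \<eta>e: "\<eta> C \<phi> = ext_class K I \<iota> \<pi> d C e"
    unfolding Ext_def by blast
  have eh: "e \<in> Hom K C (I d)" and De: "cmp K (res_diff K \<iota> \<pi> d) e = mzero K C (I (Suc d))"
    using ec unfolding ext_cocycles_def by blast+
  have \<pi>e: "cmp K (\<pi> d) e = mzero K C (S (Suc d))"
  proof -
    have pe: "cmp K (\<pi> d) e \<in> Hom K C (S (Suc d))" using cmp_hom Cc IO SO eh \<pi>h by blast
    have "cmp K (\<iota> (Suc d)) (cmp K (\<pi> d) e) = mzero K C (I (Suc d))"
      using De rd assoc[OF Cc IO SO IO eh \<pi>h \<iota>h] by simp
    also have "\<dots> = cmp K (\<iota> (Suc d)) (mzero K C (S (Suc d)))" using cmp_zero_r[OF Cc SO IO \<iota>h] by simp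
    finally show ?thesis using monD[OF Cc pe zero_hom[OF Cc SO]] by blast
  qed
  obtain e' where e'h: "e' \<in> Hom K C (S d)" and e'e: "cmp K (\<iota> d) e' = e"
    using mono_factor[OF KL AB mon cok SO IO Cc eh \<pi>e] by blast
  have Sd: "S (Suc d') = S d" and Id: "I (Suc d') = I d" using dd by simp_all
  have pepi: "epi K (I d') (S d) (\<pi> d')" using coker_epi[OF cok[of d'] SO IO] Sd by simp
  obtain B a g where B: "B \<in> Ob K" and ah: "a \<in> Hom K B (I d')" and gh: "g \<in> Hom K B C"
    and pa: "cmp K (\<pi> d') a = cmp K e' g"
    and univ: "\<forall>Y\<in>Ob K. \<forall>x\<in>Hom K Y (I d'). \<forall>y\<in>Hom K Y C. cmp K (\<pi> d') x = cmp K e' y \<longrightarrow>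
        (\<exists>u\<in>Hom K Y B. cmp K a u = x \<and> cmp K g u = y)"
    and jm: "\<forall>Y\<in>Ob K. \<forall>u1\<in>Hom K Y B. \<forall>u2\<in>Hom K Y B. cmp K a u1 = cmp K a u2 \<longrightarrow> cmp K g u1 = cmp K g u2 \<longrightarrow> u1 = u2"
    and gepi: "epi K B C g"
    using pullback[OF KL AB IO Cc SO pepi e'h] by blast
  have \<pi>'h: "\<pi> d' \<in> Hom K (I d') (S d)" using \<pi>h[of d'] Sd by simp
  have \<iota>'h: "\<iota> d' \<in> Hom K (S d') (I d')" by (rule \<iota>h)
  have cok': "is_cokernel K (S d') (I d') (S d) (\<pi> d') (\<iota> d')" using cok[of d'] Sd by simp
  have "cmp K (\<pi> d') (\<iota> d') = cmp K e' (mzero K (S d') C)"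
    using \<pi>\<iota>[of d'] Sd cmp_zero_r[OF SO Cc SO e'h] by simp
  then obtain f where fh: "f \<in> Hom K (S d') B" and af: "cmp K a f = \<iota> d'" and gf: "cmp K g f = mzero K (S d') C"
    using univ SO \<iota>'h zero_hom[OF SO Cc] by blast
  have ker: "is_kernel K (S d') B C f g"
    unfolding is_kernel_def
  proof (intro conjI ballI impI SO fh gh gf)
    fix W h assume W: "W \<in> Ob K" and h: "h \<in> Hom K W B" and gh0: "cmp K g h = mzero K W C"
    have ahh: "cmp K a h \<in> Hom K W (I d')" using cmp_hom W B IO h ah by blast
    have "cmp K (\<pi> d') (cmp K a h) = cmp K e' (cmp K g h)"
      using assoc[OF W B IO SO h ah \<pi>'h] assoc[OF W B Cc SO h gh e'h] pa by simp
    also have "\<dots> = mzero K W (S d)" using gh0 cmp_zero_r[OF W Cc SO e'h] by simp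
    finally obtain v where v: "v \<in> Hom K W (S d')" "cmp K (\<iota> d') v = cmp K a h"
      using mono_factor[OF KL AB mon cok' SO IO W ahh] by blast
    have fv: "cmp K f v \<in> Hom K W B" using cmp_hom W SO B v(1) fh by blast
    have "cmp K a (cmp K f v) = cmp K a h" using assoc[OF W SO B IO v(1) fh ah] af v(2) by simp
    moreover have "cmp K g (cmp K f v) = cmp K g h"
      using assoc[OF W SO B Cc v(1) fh gh] gf gh0 cmp_zero_l[OF W SO Cc v(1)] by simp
    ultimately have fvh: "cmp K f v = h" using jm W fv h by blast
    show "\<exists>!u. u \<in> Hom K W (S d') \<and> cmp K f u = h"
    proof (rule ex1I[of _ v])
      show "v \<in> Hom K W (S d') \<and> cmp K f v = h" using v fvh by blast
    next
      fix u assume u: "u \<in> Hom K W (S d') \<and> cmp K f u = h"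
      have "cmp K (\<iota> d') u = cmp K (cmp K a f) u" using af by simp
      also have "\<dots> = cmp K a h" using assoc[OF W SO B IO _ fh ah, of u] u by simp
      finally show "u = v" using monD[OF W _ v(1)] u v(2) by simp
    qed
  qed
  have nsplit: "\<not> split_epi K B C g"
  proof
    assume "split_epi K B C g"
    then obtain s where s: "s \<in> Hom K C B" "cmp K g s = idm K C" unfolding split_epi_def by blast
    have as: "cmp K a s \<in> Hom K C (I d')" using cmp_hom Cc B IO s(1) ah by blast
    have "e' = cmp K e' (cmp K g s)" using s(2) id_r[OF Cc SO e'h] by simp
    also have "\<dots> = cmp K (\<pi> d') (cmp K a s)"
      using assoc[OF Cc B Cc SO s(1) gh e'h] assoc[OF Cc B IO SO s(1) ah \<pi>'h] pa by simp
    finally have "e = cmp K (\<iota> d) (cmp K (\<pi> d') (cmp K a s))" using e'e by simp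
    also have "\<dots> = cmp K (res_diff K \<iota> \<pi> (d - 1)) (cmp K a s)"
      using assoc[OF Cc IO SO IO as \<pi>'h \<iota>h] rd[of d'] dd unfolding d'_def by simp
    finally have "e \<in> ext_coboundaries K I \<iota> \<pi> d C"
      unfolding ext_coboundaries_def using as d'_def by blast
    hence "\<eta> C \<phi> = \<eta> C (\<lambda>h. 0)" using cls0[OF Cc eh] \<eta>e eta0[OF Cc] by simp
    hence "\<phi> = (\<lambda>h. 0)" using bij[OF Cc] \<phi>(1) zd unfolding bij_betw_def inj_on_def by blast
    thus False using \<phi>(2) by simp
  qed
  have ras: "right_almost_split K B C g"
    unfolding right_almost_split_def
  proof (intro conjI gh nsplit ballI impI)
    fix Y h assume Y: "Y \<in> Ob K" and h: "h \<in> Hom K Y C" and ns: "\<not> split_epi K Y C h"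
    have hd: "hom_dual_map K C Y h \<phi> = (\<lambda>h. 0)"
    proof
      fix \<psi>
      show "hom_dual_map K C Y h \<phi> \<psi> = 0"
      proof (cases "\<psi> \<in> Hom K C Y")
        case True
        have hp: "cmp K h \<psi> \<in> Hom K C C" using cmp_hom Cc Y Cc True h by blast
        have "\<not> iso_endo K C (cmp K h \<psi>)"
        proof
          assume "iso_endo K C (cmp K h \<psi>)"
          then obtain v where v: "v \<in> Hom K C C" "cmp K (cmp K h \<psi>) v = idm K C" unfolding iso_endo_def by blast
          have "cmp K h (cmp K \<psi> v) = idm K C" using assoc[OF Cc Cc Y Cc v(1) True h] v(2) by simp
          moreover have "cmp K \<psi> v \<in> Hom K C Y" using cmp_hom Cc Cc Y v(1) True by blast
          ultimately show False using ns h unfolding split_epi_def by blast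
        qed
        thus ?thesis unfolding hom_dual_map_def using True \<phi>0[OF hp] by simp
      next
        case False thus ?thesis unfolding hom_dual_map_def by simp
      qed
    qed
    have "\<eta> Y (\<lambda>h. 0) = ext_class K I \<iota> \<pi> d Y (cmp K e h)"
      using nat[OF Y Cc h \<phi>(1) ec \<eta>e] hd by simp
    hence cl: "ext_class K I \<iota> \<pi> d Y (cmp K e h) = ext_class K I \<iota> \<pi> d Y (mzero K Y (I d))"
      using eta0[OF Y] by simp
    have ehh: "cmp K e h \<in> Hom K Y (I d)" using cmp_hom Y Cc IO h eh by blast
    have "cmp K (res_diff K \<iota> \<pi> d) (cmp K e h) = mzero K Y (I (Suc d))"
      using assoc[OF Y Cc IO IO h eh rdh] De cmp_zero_l[OF Y Cc IO h] by simp
    hence ehc: "cmp K e h \<in> ext_cocycles K I \<iota> \<pi> d Y" unfolding ext_cocycles_def using ehh by blast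
    have rdh': "res_diff K \<iota> \<pi> (d - 1) \<in> Hom K (I (d - 1)) (I d)" using rdh[of "d - 1"] dd unfolding d'_def by simp
    have "msub K (cmp K e h) (cmp K e h) \<in> ext_coboundaries K I \<iota> \<pi> d Y"
      unfolding ext_coboundaries_def
      using msub_self[OF Y IO ehh] cmp_zero_r[OF Y IO IO rdh'] zero_hom[OF Y IO, of "d - 1"] by force
    hence "cmp K e h \<in> ext_class K I \<iota> \<pi> d Y (cmp K e h)" unfolding ext_class_def using ehc by blast
    hence "msub K (cmp K e h) (mzero K Y (I d)) \<in> ext_coboundaries K I \<iota> \<pi> d Y"
      using cl unfolding ext_class_def by blast
    then obtain x where x: "x \<in> Hom K Y (I d')" and ex: "cmp K e h = cmp K (res_diff K \<iota> \<pi> d') x"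
      using msub_zero[OF Y IO ehh] unfolding ext_coboundaries_def d'_def by auto
    have e'hh: "cmp K e' h \<in> Hom K Y (S d)" using cmp_hom Y Cc SO h e'h by blast
    have px: "cmp K (\<pi> d') x \<in> Hom K Y (S d)" using cmp_hom Y IO SO x \<pi>'h by blast
    have "cmp K (\<iota> d) (cmp K e' h) = cmp K e h" using assoc[OF Y Cc SO IO h e'h \<iota>h] e'e by simp
    also have "\<dots> = cmp K (\<iota> d) (cmp K (\<pi> d') x)"
      using ex rd[of d'] dd assoc[OF Y IO SO IO x \<pi>'h \<iota>h] by simp
    finally have "cmp K e' h = cmp K (\<pi> d') x" using monD[OF Y e'hh px] by blast
    thus "\<exists>u\<in>Hom K Y B. cmp K g u = h" using univ Y x h by fastforce
  qed
  show ?thesis unfolding d'_def[symmetric] using B fh gh ker gepi ras by blast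
qed



end
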